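(* Every multiset $A$ of $n$ real numbers with at least two distinct elements contains, as a submultiset, $m$ copies of a set of size $r$ for some positive integers $m,r$ with $r\ge2$ and $mr^3\ge M(A)/\log n$.
   Context: For a multiset $A$ of $n$ reals, its multiplicity profile $\mu(A)=(\mu_1,\ldots,\mu_\ell)$ is the partition of $n$ such that the $\ell$ distinct elements of $A$ occur with multiplicities $\mu_1\ge\cdots\ge\mu_\ell$, and $M(A)=\sum_{i=1}^{\ell}(i-1)^2\mu_i$. Here $\log$ is the natural logarithm. *)

theory Defs
  imports Complex_Main "HOL-Library.Multiset"
begin

definition mult_profile :: "'a multiset \<Rightarrow> nat list" where
  "mult_profile A = rev (sorted_list_of_multiset (image_mset (count A) (mset_set (set_mset A))))"

text \<open>M(A) = sum_{i=1}^{l} (i-1)^2 mu_i; with 0-based list index j = i-1.\<close>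
definition M_profile :: "'a multiset \<Rightarrow> nat" where
  "M_profile A = (let \<mu> = mult_profile A in \<Sum>j<length \<mu>. j^2 * \<mu> ! j)"

end

theory Submission
  imports Defs
begin

lemma harm_tail_le_ln:
  assumes "l \<ge> 1"
  shows "(\<Sum>j\<in>{1..<l}. 1 / (real j + 1)) \<le> ln (real l)"
  using assms
proof (induction l rule: dec_induct)
  case base
  then show ?case by simp
next
  case (step k)
  have k: "real k \<ge> 1" using step.hyps by simp
  have "ln (real k / (real k + 1)) \<le> real k / (real k + 1) - 1"
    by (rule ln_le_minus_one) (use k in simp)
  also have "\<dots> = - (1 / (real k + 1))" using k by (simp add: field_simps)
  finally have "1 / (real k + 1) \<le> ln (real k + 1) - ln (real k)"
    using k by (simp add: ln_div)
  moreover have "{1..<Suc k} = insert k {1..<k}" using step.hyps by auto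
  ultimately show ?case using step.IH by (simp add: add.commute)
qed

lemma card_set_le_size: "card (set_mset A) \<le> size A"
proof -
  have "card (set_mset A) = (\<Sum>x\<in>set_mset A. 1)" by simp
  also have "\<dots> \<le> (\<Sum>x\<in>set_mset A. count A x)"
    by (rule sum_mono) (simp add: Suc_le_eq)
  also have "\<dots> = size A" by (simp add: size_multiset_overloaded_eq)
  finally show ?thesis .
qed

lemma length_filter_take:
  assumes "\<And>j. j < r \<Longrightarrow> P (xs ! j)" "r \<le> length xs"
  shows "r \<le> length (filter P xs)"
proof -
  have "filter P (take r xs) = take r xs"
    using assms by (auto simp: filter_id_conv in_set_conv_nth)
  hence "length (filter P (take r xs)) = r" using assms(2) by simp
  moreover have "filter P xs = filter P (take r xs) @ filter P (drop r xs)"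
    by (metis append_take_drop_id filter_append)
  ultimately show ?thesis by (metis le_add1 length_append)
qed

lemma profile_facts:
  fixes A :: "'a multiset"
  defines "\<mu> \<equiv> mult_profile A"
  shows "length \<mu> = card (set_mset A)"
    and "sorted_wrt (\<ge>) \<mu>"
    and "\<And>r. 1 \<le> r \<Longrightarrow> r \<le> length \<mu> \<Longrightarrow>
           \<exists>S. finite S \<and> card S = r \<and> repeat_mset (\<mu> ! (r-1)) (mset_set S) \<subseteq># A"
    and "\<And>j. j < length \<mu> \<Longrightarrow> \<mu> ! j > 0"
proof -
  define X where "X = set_mset A"
  define B where "B = image_mset (count A) (mset_set X)"
  have mu: "\<mu> = rev (sorted_list_of_multiset B)"
    unfolding \<mu>_def mult_profile_def B_def X_def by simp
  have mset_mu: "mset \<mu> = B" unfolding mu by simp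
  show len: "length \<mu> = card (set_mset A)"
    by (metis mset_mu size_mset B_def X_def size_image_mset size_mset_set)
  show sw: "sorted_wrt (\<ge>) \<mu>" unfolding mu sorted_wrt_rev by simp
  show "\<mu> ! j > 0" if "j < length \<mu>" for j
  proof -
    have "\<mu> ! j \<in># B" using that by (metis mset_mu nth_mem set_mset_mset)
    thus ?thesis unfolding B_def X_def by auto
  qed
  fix r assume r: "1 \<le> r" "r \<le> length \<mu>"
  define v where "v = \<mu> ! (r-1)"
  have "r \<le> length (filter (\<lambda>y. v \<le> y) \<mu>)"
  proof (rule length_filter_take)
    fix j assume "j < r"
    then show "v \<le> \<mu> ! j" unfolding v_def
      using sorted_wrt_nth_less[OF sw, of j "r-1"] r by (cases "j = r - 1") auto
  qed (use r in auto)
  also have "length (filter (\<lambda>y. v \<le> y) \<mu>) = size (filter_mset (\<lambda>y. v \<le> y) B)"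
    by (metis mset_filter mset_mu size_mset)
  also have "\<dots> = card {x\<in>X. v \<le> count A x}"
    unfolding B_def filter_mset_image_mset X_def by simp
  finally have "r \<le> card {x\<in>X. v \<le> count A x}" .
  then obtain S where S: "S \<subseteq> {x\<in>X. v \<le> count A x}" "card S = r"
    by (meson obtain_subset_with_card_n)
  have fin: "finite S" using S unfolding X_def by (metis (no_types, lifting) finite_set_mset finite_subset mem_Collect_eq subsetI)
  have "repeat_mset v (mset_set S) \<subseteq># A"
  proof (rule mset_subset_eqI)
    fix x show "count (repeat_mset v (mset_set S)) x \<le> count A x"
      using S fin by (cases "x \<in> S") (auto simp: count_mset_set)
  qed
  thus "\<exists>S. finite S \<and> card S = r \<and> repeat_mset (\<mu> ! (r-1)) (mset_set S) \<subseteq># A"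
    using S fin v_def by blast
qed

theorem proposition2p9:
  fixes A :: "real multiset" and n :: nat
  assumes "size A = n"
    and "card (set_mset A) \<ge> 2"
  shows "\<exists>m r S. m > 0 \<and> r \<ge> 2 \<and> finite S \<and> card S = r
           \<and> repeat_mset m (mset_set S) \<subseteq># A
           \<and> real m * real r ^ 3 \<ge> real (M_profile A) / ln (real n)"
proof -
  define \<mu> where "\<mu> = mult_profile A"
  define l where "l = length \<mu>"
  have l: "l = card (set_mset A)" unfolding l_def \<mu>_def by (rule profile_facts(1))
  have l2: "l \<ge> 2" using assms l by simp
  have ln: "l \<le> n" using l assms card_set_le_size by metis
  have pos: "\<And>j. j < l \<Longrightarrow> \<mu> ! j > 0" unfolding l_def \<mu>_def by (rule profile_facts(4))
  define f where "f r = \<mu> ! (r - 1) * r ^ 3" for r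
  have fin: "finite (f ` {2..l})" by simp
  have ne: "f ` {2..l} \<noteq> {}" using l2 by auto
  define K where "K = Max (f ` {2..l})"
  obtain r where r: "r \<in> {2..l}" "K = f r" using Max_in[OF fin ne] unfolding K_def by auto
  have Kge: "f r' \<le> K" if "r' \<in> {2..l}" for r' unfolding K_def using fin that by simp
  obtain S where S: "finite S" "card S = r" "repeat_mset (\<mu> ! (r-1)) (mset_set S) \<subseteq># A"
    using profile_facts(3)[of r A] r unfolding l_def \<mu>_def by auto
  have m0: "\<mu> ! (r-1) > 0" using pos r by auto
  have Mdef: "M_profile A = (\<Sum>j<l. j^2 * \<mu> ! j)" unfolding M_profile_def l_def \<mu>_def Let_def by (rule refl)
  have termb: "real (j^2 * \<mu> ! j) \<le> real K * (1 / (real j + 1))" if "j \<in> {1..<l}" for j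
  proof -
    have "f (j+1) \<le> K" using Kge[of "j+1"] that by auto
    hence fK: "real (\<mu> ! j) * (real j + 1)^3 \<le> real K" unfolding f_def
      by (metis Suc_eq_plus1 diff_Suc_1 of_nat_1 of_nat_add of_nat_le_iff of_nat_mult of_nat_power)
    have "real (j^2 * \<mu> ! j) * (real j + 1) \<le> real (\<mu> ! j) * (real j + 1)^3"
    proof -
      have "real j ^ 2 * (real j + 1) \<le> (real j + 1) ^ 3"
        by (simp add: power2_eq_square power3_eq_cube mult_mono)
      hence "real (\<mu> ! j) * (real j ^ 2 * (real j + 1)) \<le> real (\<mu> ! j) * (real j + 1) ^ 3"
        by (rule mult_left_mono) simp
      thus ?thesis by (simp add: algebra_simps)
    qed
    with fK have "real (j^2 * \<mu> ! j) * (real j + 1) \<le> real K" by linarith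
    thus ?thesis by (simp add: field_simps)
  qed
  have "real (M_profile A) = (\<Sum>j<l. real (j^2 * \<mu> ! j))" unfolding Mdef by simp
  also have "\<dots> = (\<Sum>j\<in>{1..<l}. real (j^2 * \<mu> ! j))"
  proof -
    have "{..<l} = insert 0 {1..<l}" using l2 by auto
    thus ?thesis by simp
  qed
  also have "\<dots> \<le> (\<Sum>j\<in>{1..<l}. real K * (1 / (real j + 1)))"
    by (rule sum_mono) (rule termb)
  also have "\<dots> = real K * (\<Sum>j\<in>{1..<l}. 1 / (real j + 1))" by (simp add: sum_distrib_left)
  also have "\<dots> \<le> real K * ln (real l)"
    by (rule mult_left_mono) (use harm_tail_le_ln[of l] l2 in auto)
  also have "\<dots> \<le> real K * ln (real n)"
    by (rule mult_left_mono) (use ln l2 in auto)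
  finally have MK: "real (M_profile A) \<le> real K * ln (real n)" .
  have lnpos: "ln (real n) > 0" using ln l2 by simp
  have "real (M_profile A) / ln (real n) \<le> real K" using MK lnpos by (simp add: divide_le_eq)
  also have "real K = real (\<mu> ! (r-1)) * real r ^ 3" unfolding r f_def by simp
  finally show ?thesis using S m0 r by auto
qed

end
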